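(* Consider a black-white array (BWA) storing at most $n=2^m$ values. Suppose the values are uniformly distributed, so that the probability that the searched value lies in a given active segment is proportional to that segment's length. Then the amortized (expected) time of a search for a value that is present in the BWA is $O(\log n)$.
   Context: A black-white array (BWA) of size $N=2^K$ stores values from a totally ordered set. Its white array is $W[1..N-1]$. For $i\ge0$, the segment of rank $i$ is the index block $[2^i,2^{i+1}-1]$, of length $2^i$. A state variable $\mathtt{total}$ counts stored values. The rank-$i$ segment is active iff bit $i$ of $\mathtt{total}$ is $1$. Between operations, all stored values lie in the active white segments, each sorted ascending. Search$(v)$: for $i=K-1$ down to $0$, if the rank-$i$ segment is active, binary-search the white rank-$i$ segment for $v$. A binary search of a segment of length $L$ costs $O(\log L+1)$. Return the index at the first success, or Nil if none. *)

theory Defs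
  imports Complex_Main
begin

text \<open>Black-white array with array size N = 2^K. The rank-i segment is the index
block [2^i, 2^(i+1)-1] of length 2^i; it is active iff bit i of tot is 1.\<close>

definition seg_len :: "nat \<Rightarrow> nat" where
  "seg_len i = 2 ^ i"

definition bwa_active :: "nat \<Rightarrow> nat \<Rightarrow> bool" where
  "bwa_active tot i \<longleftrightarrow> bit tot i"

text \<open>Cost of Search(v) when v lies in the rank-j segment (first success at rank j):
the loop visits ranks K-1 down to j; every visited rank costs 1 (loop step and
activity test), and every visited active rank additionally costs a binary search of
the segment, whose cost is given by the function bs applied to the segment length.\<close>

definition search_cost :: "(nat \<Rightarrow> real) \<Rightarrow> nat \<Rightarrow> nat \<Rightarrow> nat \<Rightarrow> real" where
  "search_cost bs K tot j =
     (\<Sum>i\<in>{j..<K}. 1 + (if bwa_active tot i then bs (seg_len i) else 0))"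

definition seg_prob :: "nat \<Rightarrow> nat \<Rightarrow> nat \<Rightarrow> real" where
  "seg_prob K tot j =
     real (seg_len j) / (\<Sum>i | i < K \<and> bwa_active tot i. real (seg_len i))"

definition expected_search_cost :: "(nat \<Rightarrow> real) \<Rightarrow> nat \<Rightarrow> nat \<Rightarrow> real" where
  "expected_search_cost bs K tot =
     (\<Sum>j | j < K \<and> bwa_active tot j. seg_prob K tot j * search_cost bs K tot j)"

end

theory Submission
  imports Defs
begin

lemma geo1: "(\<Sum>j\<le>a. (2::real)^j) = 2^(a+1) - 1"
  by (induction a) auto

lemma geo2: "(\<Sum>j\<le>a. (2::real)^j * (real a + 1 - real j)) = 2^(a+2) - real a - 3"
proof (induction a)
  case 0 then show ?case by simp
next
  case (Suc a)
  have "(\<Sum>j\<le>Suc a. (2::real)^j * (real (Suc a) + 1 - real j))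
      = (\<Sum>j\<le>Suc a. (2::real)^j * (real a + 1 - real j)) + (\<Sum>j\<le>Suc a. (2::real)^j)"
    by (simp add: sum.distrib[symmetric] algebra_simps)
  also have "\<dots> = (\<Sum>j\<le>a. (2::real)^j * (real a + 1 - real j)) + (\<Sum>j\<le>Suc a. (2::real)^j)"
    by simp
  also have "\<dots> = 2^(Suc a+2) - real (Suc a) - 3"
    using Suc geo1[of "Suc a"] by simp
  finally show ?case .
qed

lemma bit_ex: assumes "0 < (tot::nat)" "tot < 2^K" shows "\<exists>j<K. bit tot j"
proof (rule ccontr)
  assume "\<not> ?thesis"
  hence "\<forall>j. bit tot j \<longrightarrow> j < K \<longrightarrow> False" by auto
  moreover have "\<forall>j\<ge>K. \<not> bit tot j"
    using assms(2) by (metis bit_take_bit_iff take_bit_nat_eq_self_iff not_le)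
  ultimately have "\<forall>j. \<not> bit tot j" by (metis not_le)
  hence "tot = 0" by (simp add: bit_eq_iff)
  thus False using assms by simp
qed

theorem mainTheorem9:
  fixes bs :: "nat \<Rightarrow> real" and C :: real
  assumes bs_cost: "\<forall>L::nat. L \<ge> 1 \<longrightarrow> bs L \<le> C * (log 2 (real L) + 1)"
  shows "\<exists>D::real. \<forall>(m::nat) (K::nat) (tot::nat).
           1 \<le> m \<longrightarrow> 0 < tot \<longrightarrow> tot \<le> 2 ^ m \<longrightarrow> tot < 2 ^ K \<longrightarrow> K \<le> m + 1 \<longrightarrow>
           expected_search_cost bs K tot \<le> D * log 2 (real ((2::nat) ^ m))"
proof (intro exI allI impI)
  fix m K tot :: nat
  assume m1: "1 \<le> m" and tp: "0 < tot" and "tot \<le> 2 ^ m" and tK: "tot < 2 ^ K" and Km: "K \<le> m + 1"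
  define c where "c = \<bar>C\<bar>"
  have c0: "c \<ge> 0" by (simp add: c_def)
  define A where "A = {j. j < K \<and> bwa_active tot j}"
  have finA: "finite A" by (simp add: A_def)
  have neA: "A \<noteq> {}" using bit_ex[OF tp tK] by (auto simp: A_def bwa_active_def)
  define a where "a = Max A"
  have aA: "a \<in> A" using finA neA by (simp add: a_def)
  have aK: "a < K" using aA by (simp add: A_def)
  have le_a: "\<And>j. j \<in> A \<Longrightarrow> j \<le> a" using finA by (simp add: a_def)
  define S where "S = (\<Sum>i\<in>A. real (seg_len i))"
  have S_ge: "S \<ge> 2^a"
  proof -
    have "real (seg_len a) \<le> S" unfolding S_def
      by (rule member_le_sum[OF aA]) (auto simp: finA)
    thus ?thesis by (simp add: seg_len_def)
  qed
  have Spos: "S > 0" using S_ge by (smt (verit) zero_less_power)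
  have bsle: "bs (seg_len i) \<le> c * real K" if "i < K" for i
  proof -
    have "bs (seg_len i) \<le> C * (log 2 (real (2^i)) + 1)"
      using bs_cost[rule_format, of "2^i"] by (simp add: seg_len_def)
    also have "\<dots> = C * (real i + 1)" by (simp add: log_nat_power)
    also have "\<dots> \<le> c * (real i + 1)" unfolding c_def
      by (intro mult_right_mono) auto
    also have "\<dots> \<le> c * real K" using that c0 by (intro mult_left_mono) auto
    finally show ?thesis .
  qed
  have cost: "search_cost bs K tot j \<le> real K + c * real K * (real a + 1 - real j)"
    if jA: "j \<in> A" for j
  proof -
    have ja: "j \<le> a" using le_a jA .
    have "search_cost bs K tot j = (\<Sum>i\<in>{j..<K}. 1) + (\<Sum>i\<in>{j..<K}. (if bwa_active tot i then bs (seg_len i) else 0))"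
      unfolding search_cost_def by (simp add: sum.distrib)
    also have "(\<Sum>i\<in>{j..<K}. (1::real)) \<le> real K" by simp
    also have "(\<Sum>i\<in>{j..<K}. (if bwa_active tot i then bs (seg_len i) else 0))
         \<le> (\<Sum>i\<in>{j..<K}. (if i \<le> a then c * real K else 0))"
    proof (rule sum_mono)
      fix i assume i: "i \<in> {j..<K}"
      show "(if bwa_active tot i then bs (seg_len i) else 0) \<le> (if i \<le> a then c * real K else 0)"
      proof (cases "bwa_active tot i")
        case True
        hence "i \<in> A" using i by (simp add: A_def)
        hence "i \<le> a" by (rule le_a)
        then show ?thesis using True bsle[of i] i by simp
      next
        case False then show ?thesis using c0 by simp
      qed
    qed
    also have "(\<Sum>i\<in>{j..<K}. (if i \<le> a then c * real K else 0)) = (\<Sum>i\<in>{j..a}. c * real K)"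
    proof -
      have "{j..<K} = {j..a} \<union> {a<..<K}" using ja aK by auto
      hence "(\<Sum>i\<in>{j..<K}. (if i \<le> a then c * real K else 0))
          = (\<Sum>i\<in>{j..a}. (if i \<le> a then c * real K else 0)) + (\<Sum>i\<in>{a<..<K}. (if i \<le> a then c * real K else 0))"
        by (simp add: sum.union_disjoint ivl_disj_int)
      thus ?thesis by simp
    qed
    also have "\<dots> = c * real K * (real a + 1 - real j)" using ja by (simp add: of_nat_diff)
    finally show ?thesis by simp
  qed
  have "expected_search_cost bs K tot = (\<Sum>j\<in>A. real (seg_len j) / S * search_cost bs K tot j)"
    unfolding expected_search_cost_def seg_prob_def S_def A_def by simp
  also have "\<dots> \<le> (\<Sum>j\<in>A. real (seg_len j) / S * (real K + c * real K * (real a + 1 - real j)))"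
    by (intro sum_mono mult_left_mono cost) (use Spos in auto)
  also have "\<dots> \<le> (\<Sum>j\<le>a. 2^j / S * (real K + c * real K * (real a + 1 - real j)))"
    unfolding seg_len_def of_nat_power of_nat_numeral
  proof (rule sum_mono2)
    show "A \<subseteq> {..a}" using le_a by auto
    show "\<And>b. b \<in> {..a} - A \<Longrightarrow> 0 \<le> 2 ^ b / S * (real K + c * real K * (real a + 1 - real b))"
      using Spos c0 by (auto intro!: mult_nonneg_nonneg divide_nonneg_pos)
  qed simp
  also have "\<dots> = (real K * (\<Sum>j\<le>a. 2^j) + c * real K * (\<Sum>j\<le>a. 2^j * (real a + 1 - real j))) / S"
  proof -
    have "(\<Sum>j\<le>a. 2^j / S * (real K + c * real K * (real a + 1 - real j)))
        = (\<Sum>j\<le>a. 2^j * (real K + c * real K * (real a + 1 - real j))) / S"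
      by (simp add: sum_divide_distrib)
    moreover have "(\<Sum>j\<le>a. 2^j * (real K + c * real K * (real a + 1 - real j)))
        = (\<Sum>j\<le>a. real K * 2^j + c * real K * (2^j * (real a + 1 - real j)))"
      by (rule sum.cong) (auto simp: algebra_simps)
    moreover have "\<dots> = real K * (\<Sum>j\<le>a. 2^j) + c * real K * (\<Sum>j\<le>a. 2^j * (real a + 1 - real j))"
      by (simp add: sum.distrib sum_distrib_left)
    ultimately show ?thesis by simp
  qed
  also have "\<dots> = (real K * (2^(a+1) - 1) + c * real K * (2^(a+2) - real a - 3)) / S"
    by (simp add: geo1 geo2)
  also have "\<dots> \<le> (real K * 2 * 2^a + c * real K * 4 * 2^a) / S"
  proof -
    have ck: "c * real K \<ge> 0" using c0 by simp
    have "real K * (2^(a+1) - 1) \<le> real K * (2 * 2^a)" by (intro mult_left_mono) auto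
    moreover have "c * real K * (2^(a+2) - real a - 3) \<le> c * real K * (4 * 2^a)"
      using ck by (intro mult_left_mono) auto
    ultimately show ?thesis using Spos by (intro divide_right_mono) (auto simp: algebra_simps)
  qed
  also have "\<dots> = (2 * real K + 4 * c * real K) * (2^a / S)" by (simp add: algebra_simps add_divide_distrib)
  also have "\<dots> \<le> (2 * real K + 4 * c * real K) * 1"
    using Spos S_ge c0 by (intro mult_left_mono) auto
  also have "\<dots> \<le> (4 + 8 * c) * real m"
  proof -
    have "real K \<le> 2 * real m" using Km m1 by linarith
    hence "4 * c * real K \<le> 4 * c * (2 * real m)" using c0 by (intro mult_left_mono) auto
    thus ?thesis using \<open>real K \<le> 2 * real m\<close> by (simp add: algebra_simps)
  qed
  also have "\<dots> = (4 + 8 * \<bar>C\<bar>) * log 2 (real ((2::nat) ^ m))"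
    by (simp add: c_def log_nat_power)
  finally show "expected_search_cost bs K tot \<le> (4 + 8 * \<bar>C\<bar>) * log 2 (real ((2::nat) ^ m))" .
qed

end
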